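(* Let $d\ge1$, let $E\subset\mathbb{Z}^n$ be a (possibly infinite) $d$-sparse subset, and let $M$ be a paving matroid of rank $d+1$ on the ground set $E$. Then there exists a paving tropical ideal $I\subset\mathbb{B}[x_1^{\pm1},\dots,x_n^{\pm1}]$ of degree $d+1$ such that $\underline{M}(I|_E)=M$, i.e. the restriction of the underlying matroid of $I$ to $E$ equals $M$.
   Context: $\mathbb{B}=\{\infty,0\}$ with $\oplus=\min$ and multiplication $+$; $\operatorname{supp}(f)$ is the set of exponents with coefficient $\neq\infty$. A tropical ideal $I\subset\mathbb{B}[x_1^{\pm1},\dots,x_n^{\pm1}]$ is an ideal such that for all $f,g\in I$ and $\mathbf u\in\operatorname{supp}(f)\cap\operatorname{supp}(g)$ there is $h\in I$ with $\operatorname{supp}(f)\Delta\operatorname{supp}(g)\subset\operatorname{supp}(h)\subset(\operatorname{supp}(f)\cup\operatorname{supp}(g))\setminus\{\mathbf u\}$. Its underlying matroid $\underline M(I)$ on $\mathbb{Z}^n$ has as independent sets those containing no support of a polynomial in $I$; $\underline M(I|_E)$ is its restriction to $E$ (circuits: supports of polynomials of $I$ that are minimal and contained in $E$). $I$ is zero-dimensional of degree $r$ iff $\underline M(I)$ has finite rank $r$; it is a paving tropical ideal if moreover all circuits of $\underline M(I)$ have size $r$ or $r+1$. A (possibly infinite, finitary) matroid of finite rank $r$ is paving if all its circuits have size $r$ or $r+1$. $E\subset\mathbb{Z}^n$ is $d$-sparse if there is no $\mathbf u\neq\mathbf 0$ with $|E\cap(\mathbf u+E)|\ge d$. *)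

theory Defs
  imports "HOL-Analysis.Analysis"
begin

text \<open>A Laurent polynomial over the
Boolean semiring B = ({infinity,0}, min, +) is uniquely determined by its support, a finite
subset of Z^n; we represent it by that support.  Under this identification tropical
addition (min) is union of supports, and tropical multiplication (+) is the Minkowski sum
of supports; the zero polynomial is the empty support.\<close>

type_synonym ('n) bpoly = "(int ^ 'n) set"

definition bpoly_add :: "('n::finite) bpoly \<Rightarrow> 'n bpoly \<Rightarrow> 'n bpoly" where
  "bpoly_add f g = f \<union> g"

definition bpoly_mult :: "('n::finite) bpoly \<Rightarrow> 'n bpoly \<Rightarrow> 'n bpoly" where
  "bpoly_mult f g = {u + v | u v. u \<in> f \<and> v \<in> g}"

definition supp :: "('n::finite) bpoly \<Rightarrow> (int ^ 'n) set" where
  "supp f = f"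

definition bideal :: "('n::finite) bpoly set \<Rightarrow> bool" where
  "bideal I \<longleftrightarrow> (\<forall>f\<in>I. finite f) \<and> {} \<in> I \<and>
     (\<forall>f\<in>I. \<forall>g\<in>I. bpoly_add f g \<in> I) \<and>
     (\<forall>f\<in>I. \<forall>g. finite g \<longrightarrow> bpoly_mult g f \<in> I)"

definition tropical_ideal :: "('n::finite) bpoly set \<Rightarrow> bool" where
  "tropical_ideal I \<longleftrightarrow> bideal I \<and>
     (\<forall>f\<in>I. \<forall>g\<in>I. \<forall>u \<in> supp f \<inter> supp g. \<exists>h\<in>I.
        (supp f - supp g) \<union> (supp g - supp f) \<subseteq> supp h \<and>
        supp h \<subseteq> (supp f \<union> supp g) - {u})"

definition underlying_indep :: "('n::finite) bpoly set \<Rightarrow> (int ^ 'n) set \<Rightarrow> bool" where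
  "underlying_indep I A \<longleftrightarrow> (\<forall>f\<in>I. f \<noteq> {} \<longrightarrow> \<not> supp f \<subseteq> A)"

definition underlying_indep_restr :: "('n::finite) bpoly set \<Rightarrow> (int ^ 'n) set \<Rightarrow> (int ^ 'n) set \<Rightarrow> bool" where
  "underlying_indep_restr I E A \<longleftrightarrow> A \<subseteq> E \<and> underlying_indep I A"

definition has_rank :: "('a set \<Rightarrow> bool) \<Rightarrow> nat \<Rightarrow> bool" where
  "has_rank indep r \<longleftrightarrow> (\<forall>A. indep A \<longrightarrow> finite A \<and> card A \<le> r) \<and>
     (\<exists>A. indep A \<and> finite A \<and> card A = r)"

definition circuit :: "'a set \<Rightarrow> ('a set \<Rightarrow> bool) \<Rightarrow> 'a set \<Rightarrow> bool" where
  "circuit E indep C \<longleftrightarrow> C \<subseteq> E \<and> \<not> indep C \<and> (\<forall>x\<in>C. indep (C - {x}))"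

definition finite_rank_matroid :: "'a set \<Rightarrow> ('a set \<Rightarrow> bool) \<Rightarrow> nat \<Rightarrow> bool" where
  "finite_rank_matroid E indep r \<longleftrightarrow>
     indep {} \<and>
     (\<forall>A. indep A \<longrightarrow> A \<subseteq> E) \<and>
     (\<forall>A B. indep B \<and> A \<subseteq> B \<longrightarrow> indep A) \<and>
     (\<forall>A B. indep A \<and> indep B \<and> finite A \<and> finite B \<and> card A < card B \<longrightarrow>
        (\<exists>x\<in>B - A. indep (insert x A))) \<and>
     (\<forall>A. A \<subseteq> E \<and> (\<forall>F. F \<subseteq> A \<and> finite F \<longrightarrow> indep F) \<longrightarrow> indep A) \<and>
     has_rank indep r"

definition paving_matroid :: "'a set \<Rightarrow> ('a set \<Rightarrow> bool) \<Rightarrow> nat \<Rightarrow> bool" where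
  "paving_matroid E indep r \<longleftrightarrow> finite_rank_matroid E indep r \<and>
     (\<forall>C. circuit E indep C \<longrightarrow> card C = r \<or> card C = r + 1)"

text \<open>Zero-dimensional tropical ideal of degree r: underlying matroid has finite rank r.\<close>
definition paving_tropical_ideal :: "('n::finite) bpoly set \<Rightarrow> nat \<Rightarrow> bool" where
  "paving_tropical_ideal I r \<longleftrightarrow> tropical_ideal I \<and> has_rank (underlying_indep I) r \<and>
     (\<forall>C. circuit UNIV (underlying_indep I) C \<longrightarrow> card C = r \<or> card C = r + 1)"

definition d_sparse :: "nat \<Rightarrow> (int ^ ('n::finite)) set \<Rightarrow> bool" where
  "d_sparse d E \<longleftrightarrow> \<not> (\<exists>u. u \<noteq> 0 \<and>
     (\<exists>F. F \<subseteq> E \<inter> ((\<lambda>x. u + x) ` E) \<and> finite F \<and> card F \<ge> d))"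

end

theory Submission
  imports Defs
begin


definition colin :: "'a set set \<Rightarrow> nat \<Rightarrow> 'a set \<Rightarrow> bool" where
  "colin TT d S \<longleftrightarrow> (\<forall>K. K \<subseteq> S \<longrightarrow> card K = Suc d \<longrightarrow> K \<in> TT)"

definition ncirc :: "'a set set \<Rightarrow> nat \<Rightarrow> 'a set \<Rightarrow> bool" where
  "ncirc TT d C \<longleftrightarrow> C \<in> TT \<or> (finite C \<and> card C = Suc (Suc d) \<and>
      (\<forall>K. K \<subseteq> C \<longrightarrow> card K = Suc d \<longrightarrow> K \<notin> TT))"

definition goodT :: "'a set set \<Rightarrow> nat \<Rightarrow> bool" where
  "goodT TT d \<longleftrightarrow> (\<forall>T\<in>TT. card T = Suc d) \<and>
     (\<forall>T\<in>TT. \<forall>T'\<in>TT. \<forall>K. d \<le> card (T \<inter> T') \<longrightarrow> K \<subseteq> T \<union> T' \<longrightarrow> card K = Suc d \<longrightarrow> K \<in> TT)"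

lemma card_Suc_finite: "card K = Suc d \<Longrightarrow> finite K"
  using card.infinite by fastforce

lemma ncirc_finite: "goodT TT d \<Longrightarrow> ncirc TT d C \<Longrightarrow> finite C"
  unfolding goodT_def ncirc_def using card_Suc_finite by blast

lemma ncirc_card: "goodT TT d \<Longrightarrow> ncirc TT d C \<Longrightarrow> card C = Suc d \<or> card C = Suc (Suc d)"
  unfolding goodT_def ncirc_def by blast

lemma colin_single: "goodT TT d \<Longrightarrow> T \<in> TT \<Longrightarrow> colin TT d T"
  unfolding colin_def goodT_def
  by (metis card_Suc_finite card_subset_eq)

lemma colin_union:
  assumes g: "goodT TT d" and cS: "colin TT d S" and cS': "colin TT d S'"
    and Q: "Q \<subseteq> S \<inter> S'" "card Q = d" "finite Q"
  shows "colin TT d (S \<union> S')"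
proof -
  have main: "\<forall>K. card (K - S) + card (K - S') = m \<longrightarrow> K \<subseteq> S \<union> S' \<longrightarrow> card K = Suc d \<longrightarrow> K \<in> TT" for m
  proof (induction m rule: less_induct)
    case (less m)
    show ?case
    proof (intro allI impI)
      fix K assume m: "card (K - S) + card (K - S') = m" and KS: "K \<subseteq> S \<union> S'" and cK: "card K = Suc d"
      have fK: "finite K" using cK card_Suc_finite by blast
      show "K \<in> TT"
      proof (cases "K \<subseteq> S \<or> K \<subseteq> S'")
        case True thus ?thesis using cS cS' cK unfolding colin_def by blast
      next
        case False
        then obtain x w where x: "x \<in> K" "x \<notin> S" and w: "w \<in> K" "w \<notin> S'" by blast
        have xS': "x \<in> S'" and wS: "w \<in> S" using x w KS by auto
        have xw: "x \<noteq> w" using x wS by auto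
        have "\<not> Q \<subseteq> K"
        proof
          assume QK: "Q \<subseteq> K"
          have xQ: "x \<notin> Q" and wQ: "w \<notin> Q" using x w Q by auto
          hence "insert x (insert w Q) \<subseteq> K" using QK x w by auto
          hence "card (insert x (insert w Q)) \<le> card K" using fK card_mono by blast
          moreover have "card (insert x (insert w Q)) = d + 2" using xQ wQ xw Q by simp
          ultimately show False using cK by simp
        qed
        then obtain y where y: "y \<in> Q" "y \<notin> K" by blast
        have yS: "y \<in> S" "y \<in> S'" using y Q by auto
        define K1 where "K1 = insert y (K - {x})"
        define T where "T = insert y (K - {w})"
        have cK1: "card K1 = Suc d" unfolding K1_def using fK x y cK by (simp add: card_Diff_singleton)
        have cT: "card T = Suc d" unfolding T_def using fK w y cK by (simp add: card_Diff_singleton)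
        have fKS: "finite (K - S)" "finite (K - S')" using fK by auto
        have "K1 - S \<subset> K - S" unfolding K1_def using x yS by auto
        hence a1: "card (K1 - S) < card (K - S)" using psubset_card_mono fKS by blast
        have "K1 - S' = K - S'" unfolding K1_def using xS' yS by auto
        hence m1: "card (K1 - S) + card (K1 - S') < m" using a1 m by simp
        have "T - S' \<subset> K - S'" unfolding T_def using w yS by auto
        hence a2: "card (T - S') < card (K - S')" using psubset_card_mono fKS by blast
        have "T - S = K - S" unfolding T_def using wS yS by auto
        hence m2: "card (T - S) + card (T - S') < m" using a2 m by simp
        have K1S: "K1 \<subseteq> S \<union> S'" and TS: "T \<subseteq> S \<union> S'" using KS yS unfolding K1_def T_def by auto
        have K1T: "K1 \<in> TT"
          using less.IH[OF m1, rule_format, OF refl K1S cK1] .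
        have TT: "T \<in> TT"
          using less.IH[OF m2, rule_format, OF refl TS cT] .
        have sub: "insert y (K - {x, w}) \<subseteq> K1 \<inter> T" unfolding K1_def T_def by auto
        have c2: "card (K - {x, w}) = card K - 2" using fK x w xw by (simp add: card_Diff_subset)
        have "card {x, w} \<le> card K" using fK x w by (intro card_mono) auto
        hence "2 \<le> card K" using xw by simp
        have yn: "y \<notin> K - {x, w}" using y by auto
        have fK2: "finite (K - {x, w})" using fK by auto
        have "card (insert y (K - {x, w})) = Suc (card (K - {x, w}))" using yn fK2 by simp
        also have "\<dots> = d" using c2 cK \<open>2 \<le> card K\<close> by simp
        finally have cd: "card (insert y (K - {x, w})) = d" .
        have fin1: "finite (K1 \<inter> T)" unfolding K1_def using fK by auto
        have "d \<le> card (K1 \<inter> T)" using card_mono[OF fin1 sub] cd by simp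
        moreover have "K \<subseteq> K1 \<union> T" unfolding K1_def T_def using xw by auto
        ultimately show "K \<in> TT" using g K1T TT cK unfolding goodT_def by blast
      qed
    qed
  qed
  show ?thesis unfolding colin_def using main by blast
qed



lemma strong_elim:
  assumes g: "goodT TT d" and c1: "ncirc TT d C1" and c2: "ncirc TT d C2"
    and u: "u \<in> C1" "u \<in> C2" and a: "a \<in> C1" "a \<notin> C2"
  shows "\<exists>C3. ncirc TT d C3 \<and> a \<in> C3 \<and> C3 \<subseteq> (C1 \<union> C2) - {u}"
proof -
  define Z where "Z = (C1 \<union> C2) - {u} - {a}"
  have au: "a \<noteq> u" using u a by auto
  have fin: "finite C1" "finite C2" using ncirc_finite g c1 c2 by auto
  show ?thesis
  proof (cases "colin TT d Z")
    case False
    then obtain B where B: "B \<subseteq> Z" "card B = Suc d" "B \<notin> TT" unfolding colin_def by blast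
    have fB: "finite B" using B(2) card_Suc_finite by blast
    have aB: "a \<notin> B" using B Z_def by auto
    show ?thesis
    proof (cases "\<exists>K. K \<subseteq> insert a B \<and> card K = Suc d \<and> K \<in> TT")
      case True
      then obtain K where K: "K \<subseteq> insert a B" "card K = Suc d" "K \<in> TT" by blast
      have "a \<in> K"
      proof (rule ccontr)
        assume "a \<notin> K" hence "K \<subseteq> B" using K by auto
        hence "K = B" using card_subset_eq fB K B by metis
        thus False using K B by simp
      qed
      moreover have "K \<subseteq> (C1 \<union> C2) - {u}" using K(1) B(1) a au Z_def by auto
      ultimately show ?thesis using K ncirc_def by blast
    next
      case False
      have "ncirc TT d (insert a B)" unfolding ncirc_def using False fB aB B by auto
      moreover have "insert a B \<subseteq> (C1 \<union> C2) - {u}" using B(1) a au Z_def by auto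
      ultimately show ?thesis by blast
    qed
  next
    case True
    have C2T: "C2 \<in> TT"
    proof (rule ccontr)
      assume n: "C2 \<notin> TT"
      hence C2: "card C2 = Suc (Suc d)" "\<forall>K. K \<subseteq> C2 \<longrightarrow> card K = Suc d \<longrightarrow> K \<notin> TT"
        using c2 ncirc_def by auto
      have s: "C2 - {u} \<subseteq> Z" using Z_def a by auto
      have cc: "card (C2 - {u}) = Suc d" using C2 u fin by simp
      hence "C2 - {u} \<in> TT" using True s colin_def by blast
      thus False using C2(2) cc by auto
    qed
    have cC2: "card C2 = Suc d" using g C2T goodT_def by blast
    have colC2: "colin TT d C2" using colin_single g C2T by blast
    have Q: "C2 - {u} \<subseteq> Z \<inter> C2" "card (C2 - {u}) = d" "finite (C2 - {u})"
      using Z_def a cC2 u fin by auto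
    have colZ2: "colin TT d (Z \<union> C2)" using colin_union[OF g True colC2 Q] .
    show ?thesis
    proof (cases "C1 \<in> TT")
      case True
      have cC1: "card C1 = Suc d" using g True goodT_def by blast
      have Q1: "C1 - {a} \<subseteq> (Z \<union> C2) \<inter> C1" "card (C1 - {a}) = d" "finite (C1 - {a})"
        using Z_def a u cC1 fin by auto
      have col: "colin TT d ((Z \<union> C2) \<union> C1)"
        using colin_union[OF g colZ2 colin_single[OF g True] Q1] .
      define K where "K = insert a (C2 - {u})"
      have Ksub: "K \<subseteq> (Z \<union> C2) \<union> C1" using K_def a by auto
      have cK: "card K = Suc d" using K_def Q a by simp
      have "K \<in> TT" using col Ksub cK colin_def by blast
      moreover have "K \<subseteq> (C1 \<union> C2) - {u}" using K_def a au by auto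
      ultimately show ?thesis using K_def ncirc_def by blast
    next
      case False
      hence C1: "card C1 = Suc (Suc d)" "\<forall>K. K \<subseteq> C1 \<longrightarrow> card K = Suc d \<longrightarrow> K \<notin> TT"
        using c1 ncirc_def by auto
      have s: "C1 - {a} \<subseteq> Z \<union> C2" using Z_def u by auto
      have cc: "card (C1 - {a}) = Suc d" using C1 a fin by simp
      hence "C1 - {a} \<in> TT" using colZ2 s colin_def by blast
      thus ?thesis using C1(2) cc by auto
    qed
  qed
qed

definition IdealOf :: "(int ^ 'n::finite) set set \<Rightarrow> nat \<Rightarrow> 'n bpoly set" where
  "IdealOf TT d = {S. finite S \<and> (\<forall>x\<in>S. \<exists>C. ncirc TT d C \<and> x \<in> C \<and> C \<subseteq> S)}"

lemma ncirc_transl: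
  fixes TT :: "(int ^ 'n::finite) set set"
  assumes tr: "\<And>T p. T \<in> TT \<Longrightarrow> (\<lambda>x. p + x) ` T \<in> TT" and c: "ncirc TT d C"
  shows "ncirc TT d ((\<lambda>x. p + x) ` C)"
proof (cases "C \<in> TT")
  case True thus ?thesis using tr ncirc_def by blast
next
  case False
  hence C: "finite C" "card C = Suc (Suc d)" "\<forall>K. K \<subseteq> C \<longrightarrow> card K = Suc d \<longrightarrow> K \<notin> TT"
    using c ncirc_def by auto
  have inj: "inj_on (\<lambda>x. q + x) X" for q :: "int ^ 'n" and X by (simp add: inj_on_def)
  have "\<forall>K. K \<subseteq> (\<lambda>x. p + x) ` C \<longrightarrow> card K = Suc d \<longrightarrow> K \<notin> TT"
  proof (intro allI impI notI)
    fix K assume K: "K \<subseteq> (\<lambda>x. p + x) ` C" "card K = Suc d" "K \<in> TT"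
    have "(\<lambda>x. - p + x) ` K \<subseteq> C" using K(1) by auto
    moreover have "card ((\<lambda>x. - p + x) ` K) = Suc d" using K(2) by (simp add: card_image inj_on_def)
    moreover have "(\<lambda>x. - p + x) ` K \<in> TT" using tr K(3) by blast
    ultimately show False using C(3) by blast
  qed
  moreover have "card ((\<lambda>x. p + x) ` C) = Suc (Suc d)" using C(2) card_image[OF inj] by simp
  ultimately show ?thesis unfolding ncirc_def using C(1) by blast
qed

lemma ncirc_in_ideal: "goodT TT d \<Longrightarrow> ncirc TT d C \<Longrightarrow> C \<in> IdealOf TT d"
  unfolding IdealOf_def using ncirc_finite by blast

lemma ncirc_nonempty: "goodT TT d \<Longrightarrow> ncirc TT d C \<Longrightarrow> C \<noteq> {}"
  using ncirc_card by fastforce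

lemma elim_helper:
  assumes g: "goodT TT d" and f: "f \<in> IdealOf TT d" and gg: "g \<in> IdealOf TT d"
    and u: "u \<in> f" "u \<in> g" and x: "x \<in> f" "x \<notin> g"
  shows "\<exists>C. ncirc TT d C \<and> x \<in> C \<and> C \<subseteq> (f \<union> g) - {u}"
proof -
  obtain C1 where C1: "ncirc TT d C1" "x \<in> C1" "C1 \<subseteq> f" using f x unfolding IdealOf_def by blast
  show ?thesis
  proof (cases "u \<in> C1")
    case False thus ?thesis using C1 by blast
  next
    case True
    obtain C2 where C2: "ncirc TT d C2" "u \<in> C2" "C2 \<subseteq> g" using gg u unfolding IdealOf_def by blast
    have "x \<notin> C2" using C2 x by auto
    from strong_elim[OF g C1(1) C2(1) True C2(2) C1(2) this]
    show ?thesis using C1 C2 by blast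
  qed
qed

lemma tropical_IdealOf:
  fixes TT :: "(int ^ 'n::finite) set set"
  assumes g: "goodT TT d" and tr: "\<And>T p. T \<in> TT \<Longrightarrow> (\<lambda>x. p + x) ` T \<in> TT"
  shows "tropical_ideal (IdealOf TT d)"
proof -
  have mult: "bpoly_mult h f \<in> IdealOf TT d" if f: "f \<in> IdealOf TT d" and h: "finite h" for f h
  proof -
    have "bpoly_mult h f \<subseteq> (\<lambda>(a, b). a + b) ` (h \<times> f)" unfolding bpoly_mult_def by auto
    moreover have "finite f" using f IdealOf_def by blast
    ultimately have fin: "finite (bpoly_mult h f)" using h finite_subset by blast
    have "\<exists>C. ncirc TT d C \<and> z \<in> C \<and> C \<subseteq> bpoly_mult h f" if z: "z \<in> bpoly_mult h f" for z
    proof -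
      obtain p q where pq: "z = p + q" "p \<in> h" "q \<in> f" using z unfolding bpoly_mult_def by blast
      obtain C where C: "ncirc TT d C" "q \<in> C" "C \<subseteq> f" using f pq unfolding IdealOf_def by blast
      have "ncirc TT d ((\<lambda>x. p + x) ` C)" using ncirc_transl[OF tr C(1)] by blast
      moreover have "(\<lambda>x. p + x) ` C \<subseteq> bpoly_mult h f" using C(3) pq unfolding bpoly_mult_def by blast
      ultimately show ?thesis using pq C(2) by blast
    qed
    thus ?thesis using fin unfolding IdealOf_def by blast
  qed
  have bid: "bideal (IdealOf TT d)"
    unfolding bideal_def
  proof (intro conjI ballI allI impI)
    show "\<And>f. f \<in> IdealOf TT d \<Longrightarrow> finite f" unfolding IdealOf_def by blast
    show "{} \<in> IdealOf TT d" unfolding IdealOf_def by blast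
    show "\<And>f g. f \<in> IdealOf TT d \<Longrightarrow> g \<in> IdealOf TT d \<Longrightarrow> bpoly_add f g \<in> IdealOf TT d"
      unfolding IdealOf_def bpoly_add_def by blast
    show "\<And>f g. f \<in> IdealOf TT d \<Longrightarrow> finite g \<Longrightarrow> bpoly_mult g f \<in> IdealOf TT d"
      using mult by blast
  qed
  have el: "\<exists>h\<in>IdealOf TT d. (supp f - supp g) \<union> (supp g - supp f) \<subseteq> supp h \<and>
        supp h \<subseteq> (supp f \<union> supp g) - {u}"
    if f: "f \<in> IdealOf TT d" and gg: "g \<in> IdealOf TT d" and u: "u \<in> supp f \<inter> supp g" for f g u
  proof -
    define X where "X = (f \<union> g) - {u}"
    define h where "h = {x \<in> X. \<exists>C. ncirc TT d C \<and> x \<in> C \<and> C \<subseteq> X}"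
    have ff: "finite f" "finite g" using f gg IdealOf_def by auto
    have "h \<in> IdealOf TT d" unfolding IdealOf_def h_def using ff X_def by auto
    moreover have "f - g \<subseteq> h" using elim_helper[OF g f gg] u unfolding h_def X_def supp_def by blast
    moreover have "g - f \<subseteq> h" using elim_helper[OF g gg f] u unfolding h_def X_def supp_def by blast
    moreover have "h \<subseteq> X" unfolding h_def by blast
    ultimately show ?thesis unfolding supp_def X_def by blast
  qed
  show ?thesis unfolding tropical_ideal_def using bid el by blast
qed

lemma ui_iff:
  assumes g: "goodT TT d"
  shows "underlying_indep (IdealOf TT d) A \<longleftrightarrow> (\<forall>C. ncirc TT d C \<longrightarrow> \<not> C \<subseteq> A)"
proof
  assume "underlying_indep (IdealOf TT d) A"
  thus "\<forall>C. ncirc TT d C \<longrightarrow> \<not> C \<subseteq> A" unfolding underlying_indep_def supp_def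
    using ncirc_in_ideal[OF g] ncirc_nonempty[OF g] by blast
next
  assume a: "\<forall>C. ncirc TT d C \<longrightarrow> \<not> C \<subseteq> A"
  show "underlying_indep (IdealOf TT d) A" unfolding underlying_indep_def supp_def
  proof (intro ballI impI notI)
    fix f assume f: "f \<in> IdealOf TT d" "f \<noteq> {}" "f \<subseteq> A"
    then obtain x where "x \<in> f" by blast
    then obtain C where "ncirc TT d C" "C \<subseteq> f" using f(1) IdealOf_def by blast
    thus False using a f(3) by blast
  qed
qed

lemma big_has_circ:
  assumes Y: "finite Y" "card Y = Suc (Suc d)"
  shows "\<exists>C. ncirc TT d C \<and> C \<subseteq> Y"
proof (cases "\<exists>K. K \<subseteq> Y \<and> card K = Suc d \<and> K \<in> TT")
  case True thus ?thesis unfolding ncirc_def by blast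
next
  case False thus ?thesis unfolding ncirc_def using Y by blast
qed

lemma ui_rank:
  assumes g: "goodT TT d" and A: "underlying_indep (IdealOf TT d) A"
  shows "finite A \<and> card A \<le> Suc d"
proof (rule ccontr)
  assume n: "\<not> (finite A \<and> card A \<le> Suc d)"
  obtain Y where Y: "Y \<subseteq> A" "finite Y" "card Y = Suc (Suc d)"
  proof (cases "finite A")
    case True
    hence "Suc (Suc d) \<le> card A" using n by simp
    thus ?thesis using obtain_subset_with_card_n that by metis
  next
    case False thus ?thesis using infinite_arbitrarily_large that by metis
  qed
  then obtain C where "ncirc TT d C" "C \<subseteq> Y" using big_has_circ by blast
  thus False using A Y(1) ui_iff[OF g] by blast
qed

lemma ui_circuit:
  assumes g: "goodT TT d" and c: "circuit UNIV (underlying_indep (IdealOf TT d)) C"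
  shows "ncirc TT d C"
proof -
  have n: "\<not> underlying_indep (IdealOf TT d) C" and r: "\<forall>x\<in>C. underlying_indep (IdealOf TT d) (C - {x})"
    using c unfolding circuit_def by auto
  obtain C' where C': "ncirc TT d C'" "C' \<subseteq> C" using n ui_iff[OF g] by blast
  have "C' = C"
  proof (rule ccontr)
    assume "C' \<noteq> C"
    then obtain x where "x \<in> C" "x \<notin> C'" using C' by blast
    hence "C' \<subseteq> C - {x}" using C' by blast
    thus False using r \<open>x \<in> C\<close> C' ui_iff[OF g] by blast
  qed
  thus ?thesis using C' by simp
qed



definition TF :: "(int ^ 'n::finite) set \<Rightarrow> ((int ^ 'n) set \<Rightarrow> bool) \<Rightarrow> nat \<Rightarrow> (int ^ 'n) set set" where
  "TF E ind d = {T. \<exists>v A. A \<subseteq> E \<and> card A = Suc d \<and> \<not> ind A \<and> T = (\<lambda>x. v + x) ` A}"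

lemma mindep:
  assumes "finite S" "\<not> ind S"
  shows "\<exists>C\<subseteq>S. \<not> ind C \<and> (\<forall>x\<in>C. ind (C - {x}))"
  using assms
proof (induction S rule: finite_psubset_induct)
  case (psubset S)
  show ?case
  proof (cases "\<forall>x\<in>S. ind (S - {x})")
    case True thus ?thesis using psubset by blast
  next
    case False
    then obtain x where "x \<in> S" "\<not> ind (S - {x})" by blast
    hence "S - {x} \<subset> S" by blast
    from psubset.IH[OF this \<open>\<not> ind (S - {x})\<close>] show ?thesis by blast
  qed
qed

lemma small_indep:
  assumes P: "paving_matroid E ind (d + 1)" and S: "S \<subseteq> E" "finite S" "card S \<le> d"
  shows "ind S"
proof (rule ccontr)
  assume "\<not> ind S"
  then obtain C where C: "C \<subseteq> S" "\<not> ind C" "\<forall>x\<in>C. ind (C - {x})" using mindep[OF S(2)] by blast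
  have "circuit E ind C" unfolding circuit_def using C S by blast
  moreover have "\<forall>C. circuit E ind C \<longrightarrow> card C = d + 1 \<or> card C = d + 1 + 1"
    using P unfolding paving_matroid_def by (rule conjunct2)
  ultimately have "card C = d + 1 \<or> card C = d + 1 + 1" by blast
  moreover have "card C \<le> d" using card_mono[OF S(2) C(1)] S(3) by simp
  ultimately show False by simp
qed

lemma sparseD:
  assumes sp: "d_sparse d E" and "u \<noteq> 0" "F \<subseteq> E" "F \<subseteq> (\<lambda>x. u + x) ` E" "finite F" "d \<le> card F"
  shows False
  using assms unfolding d_sparse_def by blast

lemma inj_transl: "inj_on (\<lambda>x. (v :: int ^ 'n::finite) + x) X"
  by (simp add: inj_on_def)

lemma TF_card: "T \<in> TF E ind d \<Longrightarrow> card T = Suc d"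
proof -
  assume "T \<in> TF E ind d"
  then obtain v A where A: "card A = Suc d" "T = (\<lambda>x. v + x) ` A"
    unfolding TF_def by blast
  thus ?thesis using card_image[OF inj_transl, of v A] by simp
qed

lemma TF_dep:
  assumes sp: "d_sparse d E" and T: "T \<in> TF E ind d" "T \<subseteq> E"
  shows "\<not> ind T"
proof -
  obtain v A where A: "A \<subseteq> E" "card A = Suc d" "\<not> ind A" "T = (\<lambda>x. v + x) ` A"
    using T unfolding TF_def by blast
  show ?thesis
  proof (cases "v = 0")
    case True thus ?thesis using A by simp
  next
    case False
    have "finite T" using A card_Suc_finite by blast
    moreover have "d \<le> card T" using TF_card[OF T(1)] by simp
    moreover have "T \<subseteq> (\<lambda>x. v + x) ` E" using A by blast
    ultimately show ?thesis using sparseD[OF sp False T(2)] by blast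
  qed
qed

lemma TF_transl: "T \<in> TF E ind d \<Longrightarrow> (\<lambda>x. p + x) ` T \<in> TF E ind d"
proof -
  assume "T \<in> TF E ind d"
  then obtain v A where A: "A \<subseteq> E" "card A = Suc d" "\<not> ind A" "T = (\<lambda>x. v + x) ` A"
    unfolding TF_def by blast
  have "(\<lambda>x. p + x) ` T = (\<lambda>x. (p + v) + x) ` A" using A(4) by (auto simp: image_image add.assoc)
  thus ?thesis using A unfolding TF_def by blast
qed

lemma TF_good:
  assumes P: "paving_matroid E ind (d + 1)" and sp: "d_sparse d E"
  shows "goodT (TF E ind d) d"
  unfolding goodT_def
proof (intro conjI ballI allI impI)
  show "\<And>T. T \<in> TF E ind d \<Longrightarrow> card T = Suc d" using TF_card by blast
next
  fix T T' K assume T: "T \<in> TF E ind d" and T': "T' \<in> TF E ind d"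
    and i: "d \<le> card (T \<inter> T')" and K: "K \<subseteq> T \<union> T'" "card K = Suc d"
  obtain v A where A: "A \<subseteq> E" "card A = Suc d" "\<not> ind A" "T = (\<lambda>x. v + x) ` A"
    using T unfolding TF_def by blast
  obtain w B where B: "B \<subseteq> E" "card B = Suc d" "\<not> ind B" "T' = (\<lambda>x. w + x) ` B"
    using T' unfolding TF_def by blast
  have fA: "finite A" "finite B" using A B card_Suc_finite by blast+
  have indhered: "\<And>X Y. ind Y \<Longrightarrow> X \<subseteq> Y \<Longrightarrow> ind X" using P
    unfolding paving_matroid_def finite_rank_matroid_def by blast
  have aug: "\<And>X Y. ind X \<Longrightarrow> ind Y \<Longrightarrow> finite X \<Longrightarrow> finite Y \<Longrightarrow> card X < card Y \<Longrightarrow>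
        \<exists>x\<in>Y - X. ind (insert x X)" using P
    unfolding paving_matroid_def finite_rank_matroid_def by blast
  show "K \<in> TF E ind d"
  proof (cases "v = w")
    case False
    define F where "F = (\<lambda>x. x - v) ` (T \<inter> T')"
    have FE: "F \<subseteq> E" unfolding F_def using A(1,4) by auto
    have FS: "F \<subseteq> (\<lambda>x. (w - v) + x) ` E"
    proof
      fix y assume "y \<in> F"
      then obtain b where "b \<in> B" "y = (w + b) - v" unfolding F_def using B(4) by auto
      hence "y = (w - v) + b" by (simp add: algebra_simps)
      thus "y \<in> (\<lambda>x. (w - v) + x) ` E" using \<open>b \<in> B\<close> B(1) by blast
    qed
    have fF: "finite F" unfolding F_def using A(4) fA by auto
    have cF: "card F = card (T \<inter> T')" unfolding F_def
      by (rule card_image) (simp add: inj_on_def)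
    have wv: "w - v \<noteq> 0" using False by simp
    from sparseD[OF sp wv FE FS fF] cF i show ?thesis by simp
  next
    case True
    define K' where "K' = (\<lambda>x. x - v) ` K"
    have KK: "K = (\<lambda>x. v + x) ` K'" unfolding K'_def by (auto simp: image_image)
    have K'sub: "K' \<subseteq> A \<union> B" unfolding K'_def using K(1) A(4) B(4) True by auto
    have cK': "card K' = Suc d" unfolding K'_def using K(2)
      by (simp add: card_image inj_on_def)
    have "T \<inter> T' = (\<lambda>x. v + x) ` (A \<inter> B)" using A(4) B(4) True by auto
    hence cAB: "d \<le> card (A \<inter> B)" using i card_image[OF inj_transl, of v "A \<inter> B"] by simp
    have "\<not> ind K'"
    proof
      assume iK: "ind K'"
      show False
      proof (cases "A = B")
        case True
        hence "K' = A" using K'sub card_subset_eq[OF fA(1)] cK' A(2) by auto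
        thus False using iK A(3) by simp
      next
        case False
        have "A \<inter> B \<noteq> A \<or> A \<inter> B \<noteq> B" using False by blast
        have "card (A \<inter> B) \<noteq> Suc d"
        proof
          assume h: "card (A \<inter> B) = Suc d"
          have "A \<inter> B = A" using card_subset_eq[OF fA(1) Int_lower1] h A(2) by simp
          moreover have "A \<inter> B = B" using card_subset_eq[OF fA(2) Int_lower2] h B(2) by simp
          ultimately show False using False by simp
        qed
        moreover have "card (A \<inter> B) \<le> Suc d" using card_mono[OF fA(1) Int_lower1] A(2) by simp
        ultimately have cd: "card (A \<inter> B) = d" using cAB by simp
        have iAB: "ind (A \<inter> B)" using small_indep[OF P, of "A \<inter> B"] A(1) fA cd by auto
        obtain x where x: "x \<in> K' - (A \<inter> B)" "ind (insert x (A \<inter> B))"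
          using aug[OF iAB iK] fA cK' cd card_Suc_finite[OF cK'] by auto
        have xAB: "x \<in> A \<union> B" using x K'sub by blast
        show False
        proof (cases "x \<in> A")
          case True
          have s: "insert x (A \<inter> B) \<subseteq> A" using True by blast
          have "card (insert x (A \<inter> B)) = Suc d" using x cd fA by simp
          hence "insert x (A \<inter> B) = A" using card_subset_eq[OF fA(1) s] A(2) by simp
          thus False using x A(3) by simp
        next
          case False
          hence xB: "x \<in> B" using xAB by blast
          have s: "insert x (A \<inter> B) \<subseteq> B" using xB by blast
          have "card (insert x (A \<inter> B)) = Suc d" using x cd fA by simp
          hence "insert x (A \<inter> B) = B" using card_subset_eq[OF fA(2) s] B(2) by simp
          thus False using x B(3) by simp
        qed
      qed
    qed
    moreover have "K' \<subseteq> E" using K'sub A(1) B(1) by blast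
    ultimately show ?thesis unfolding TF_def using KK cK' by blast
  qed
qed



theorem mainTheorem9:
  fixes d :: nat and E :: "(int ^ 'n) set" and indepM :: "(int ^ 'n) set \<Rightarrow> bool"
  assumes "d \<ge> 1"
    and "d_sparse d E"
    and "paving_matroid E indepM (d + 1)"
  shows "\<exists>I :: 'n bpoly set. paving_tropical_ideal I (d + 1) \<and>
           (\<forall>A. underlying_indep_restr I E A \<longleftrightarrow> indepM A)"
proof -
  note sp = assms(2) and P = assms(3)
  define TT where "TT = TF E indepM d"
  define I where "I = IdealOf TT d"
  have g: "goodT TT d" unfolding TT_def using TF_good[OF P sp] .
  have tr: "\<And>T p. T \<in> TT \<Longrightarrow> (\<lambda>x. p + x) ` T \<in> TT" unfolding TT_def using TF_transl by blast
  have FM: "finite_rank_matroid E indepM (d + 1)"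
    using P unfolding paving_matroid_def by (rule conjunct1)
  have PC: "\<forall>C. circuit E indepM C \<longrightarrow> card C = d + 1 \<or> card C = d + 1 + 1"
    using P unfolding paving_matroid_def by (rule conjunct2)
  note FM' = FM[unfolded finite_rank_matroid_def]
  have M1: "\<And>A. indepM A \<Longrightarrow> A \<subseteq> E" using FM'[THEN conjunct2, THEN conjunct1] by blast
  have M2: "\<And>A B. indepM B \<Longrightarrow> A \<subseteq> B \<Longrightarrow> indepM A"
    using FM'[THEN conjunct2, THEN conjunct2, THEN conjunct1] by blast
  have M3: "\<And>A. A \<subseteq> E \<Longrightarrow> (\<forall>F. F \<subseteq> A \<and> finite F \<longrightarrow> indepM F) \<Longrightarrow> indepM A"
    using FM'[THEN conjunct2, THEN conjunct2, THEN conjunct2, THEN conjunct2, THEN conjunct1] by blast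
  have M4: "has_rank indepM (d + 1)"
    using FM'[THEN conjunct2, THEN conjunct2, THEN conjunct2, THEN conjunct2, THEN conjunct2] .
  have M5: "\<And>C. circuit E indepM C \<Longrightarrow> card C = d + 1 \<or> card C = d + 1 + 1" using PC by blast
  note M = M1 M2 M3 M4 M5
  have R1: "\<forall>C. ncirc TT d C \<longrightarrow> \<not> C \<subseteq> A" if A: "indepM A" for A
  proof (intro allI impI notI)
    fix C assume C: "ncirc TT d C" "C \<subseteq> A"
    have iC: "indepM C" using M(2) A C(2) by blast
    have CE: "C \<subseteq> E" using M(1) iC by blast
    show False
    proof (cases "C \<in> TT")
      case True
      hence "C \<in> TF E indepM d" unfolding TT_def .
      thus False using TF_dep[OF sp _ CE] iC by blast
    next
      case False
      hence "card C = Suc (Suc d)" using C(1) unfolding ncirc_def by blast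
      moreover have "card C \<le> d + 1" using M(4) iC unfolding has_rank_def by blast
      ultimately show False by simp
    qed
  qed
  have R2: "indepM A" if AE: "A \<subseteq> E" and nc: "\<forall>C. ncirc TT d C \<longrightarrow> \<not> C \<subseteq> A" for A
  proof (rule M(3)[OF AE], intro allI impI)
    fix F assume F: "F \<subseteq> A \<and> finite F"
    show "indepM F"
    proof (rule ccontr)
      assume "\<not> indepM F"
      then obtain C where C: "C \<subseteq> F" "\<not> indepM C" "\<forall>x\<in>C. indepM (C - {x})"
        using mindep[of F indepM] F by blast
      have CE: "C \<subseteq> E" using C F AE by blast
      have fC: "finite C" using C F finite_subset by blast
      have "circuit E indepM C" unfolding circuit_def using C CE by blast
      hence cc: "card C = d + 1 \<or> card C = d + 1 + 1" using M(5) by blast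
      have "ncirc TT d C"
      proof (cases "card C = d + 1")
        case True
        have e: "C = (\<lambda>x. 0 + x) ` C" by simp
        have "C \<in> TF E indepM d" unfolding TF_def
          using True CE C(2) e by (intro CollectI exI[of _ 0] exI[of _ C]) simp
        hence "C \<in> TT" unfolding TT_def .
        thus ?thesis unfolding ncirc_def by blast
      next
        case False
        hence c2: "card C = Suc (Suc d)" using cc by simp
        have "\<forall>K. K \<subseteq> C \<longrightarrow> card K = Suc d \<longrightarrow> K \<notin> TT"
        proof (intro allI impI notI)
          fix K assume K: "K \<subseteq> C" "card K = Suc d" "K \<in> TT"
          have KT: "K \<in> TF E indepM d" using K(3) unfolding TT_def .
          have nK: "\<not> indepM K" using TF_dep[OF sp KT] K CE by blast
          have "K \<noteq> C" using K c2 by auto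
          then obtain x where "x \<in> C" "x \<notin> K" using K by blast
          hence "K \<subseteq> C - {x}" using K by blast
          thus False using M(2) C(3) \<open>x \<in> C\<close> nK by blast
        qed
        thus ?thesis unfolding ncirc_def using fC c2 by blast
      qed
      thus False using nc C F by blast
    qed
  qed
  have trop: "tropical_ideal I" unfolding I_def using tropical_IdealOf[OF g tr] .
  obtain B where B: "indepM B" "finite B" "card B = d + 1" using M(4) unfolding has_rank_def by blast
  have hr: "has_rank (underlying_indep I) (d + 1)"
    unfolding has_rank_def
  proof (intro conjI allI impI)
    fix A assume "underlying_indep I A"
    thus "finite A" "card A \<le> d + 1" using ui_rank[OF g] unfolding I_def by auto
  next
    have "underlying_indep I B" unfolding I_def using ui_iff[OF g, of B] R1[OF B(1)] by simp
    thus "\<exists>A. underlying_indep I A \<and> finite A \<and> card A = d + 1" using B by blast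
  qed
  have circ: "\<forall>C. circuit UNIV (underlying_indep I) C \<longrightarrow> card C = d + 1 \<or> card C = d + 1 + 1"
  proof (intro allI impI)
    fix C assume "circuit UNIV (underlying_indep I) C"
    hence "ncirc TT d C" using ui_circuit[OF g] unfolding I_def by blast
    thus "card C = d + 1 \<or> card C = d + 1 + 1" using ncirc_card[OF g] by simp
  qed
  have restr: "\<forall>A. underlying_indep_restr I E A \<longleftrightarrow> indepM A"
  proof (intro allI iffI)
    fix A assume a: "underlying_indep_restr I E A"
    have AE: "A \<subseteq> E" and u: "underlying_indep (IdealOf TT d) A"
      using a unfolding underlying_indep_restr_def I_def by auto
    have "\<forall>C. ncirc TT d C \<longrightarrow> \<not> C \<subseteq> A" using u ui_iff[OF g, of A] by simp
    thus "indepM A" using R2[OF AE] by blast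
  next
    fix A assume a: "indepM A"
    have "underlying_indep (IdealOf TT d) A" using ui_iff[OF g, of A] R1[OF a] by simp
    thus "underlying_indep_restr I E A"
      unfolding underlying_indep_restr_def I_def using M1[OF a] by simp
  qed
  show ?thesis unfolding paving_tropical_ideal_def using trop hr circ restr by blast
qed

end
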